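(* Let $G$ be the 2-blowup of $F_3$. Then $\chi(G)=7$.
   Context: $F_3$ is the graph on $\{v_1,\dots,v_6,x,y,z\}$ where $v_1\cdots v_6v_1$ is an induced 6-cycle, $x$ is adjacent to $v_1,v_2,v_3$, $y$ to $v_3,v_4,v_5$, $z$ to $v_5,v_6,v_1$, $\{x,y,z\}$ is a triangle, and there are no other edges. The 2-blowup of $H$ is obtained by replacing each vertex $v$ of $H$ by a clique $Q_v$ of size 2, with $Q_u$ complete to $Q_v$ if $uv\in E(H)$ and no edges between $Q_u,Q_v$ otherwise. *)

theory Defs
  imports Main
begin

text \<open>Simple graphs are given by a finite vertex type and a symmetric irreflexive
adjacency relation.\<close>

definition proper_colouring :: "('a \<Rightarrow> 'a \<Rightarrow> bool) \<Rightarrow> nat \<Rightarrow> ('a \<Rightarrow> nat) \<Rightarrow> bool" where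
  "proper_colouring E k c \<longleftrightarrow> (\<forall>v. c v < k) \<and> (\<forall>u v. E u v \<longrightarrow> c u \<noteq> c v)"

definition colourable :: "('a \<Rightarrow> 'a \<Rightarrow> bool) \<Rightarrow> nat \<Rightarrow> bool" where
  "colourable E k \<longleftrightarrow> (\<exists>c. proper_colouring E k c)"

definition chromatic_number :: "('a \<Rightarrow> 'a \<Rightarrow> bool) \<Rightarrow> nat" where
  "chromatic_number E = (LEAST k. colourable E k)"

datatype F3V = V1 | V2 | V3 | V4 | V5 | V6 | X | Y | Z

definition F3_edges :: "(F3V \<times> F3V) set" where
  "F3_edges = {(V1,V2),(V2,V3),(V3,V4),(V4,V5),(V5,V6),(V6,V1),
               (X,V1),(X,V2),(X,V3),
               (Y,V3),(Y,V4),(Y,V5),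
               (Z,V5),(Z,V6),(Z,V1),
               (X,Y),(Y,Z),(Z,X)}"

definition F3_adj :: "F3V \<Rightarrow> F3V \<Rightarrow> bool" where
  "F3_adj u v \<longleftrightarrow> (u, v) \<in> F3_edges \<or> (v, u) \<in> F3_edges"

text \<open>2-blowup: vertex v replaced by clique {(v,False),(v,True)}; Q_u complete to Q_v iff uv is an edge.\<close>
definition blowup2 :: "('a \<Rightarrow> 'a \<Rightarrow> bool) \<Rightarrow> ('a \<times> bool) \<Rightarrow> ('a \<times> bool) \<Rightarrow> bool" where
  "blowup2 E p q \<longleftrightarrow> (fst p = fst q \<and> snd p \<noteq> snd q) \<or> E (fst p) (fst q)"

end

theory Submission
  imports Defs
begin

fun col7 :: "F3V \<times> bool \<Rightarrow> nat" where
  "col7 (V1, b) = (if b then 1 else 0)"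
| "col7 (V2, b) = (if b then 3 else 2)"
| "col7 (V3, b) = (if b then 4 else 0)"
| "col7 (V4, b) = (if b then 5 else 2)"
| "col7 (V5, b) = (if b then 6 else 0)"
| "col7 (V6, b) = (if b then 5 else 3)"
| "col7 (X, b) = (if b then 6 else 5)"
| "col7 (Y, b) = (if b then 3 else 1)"
| "col7 (Z, b) = (if b then 4 else 2)"

lemma col7_ok: "proper_colouring (blowup2 F3_adj) 7 col7"
  unfolding proper_colouring_def
proof (intro conjI allI impI)
  fix v :: "F3V \<times> bool" show "col7 v < 7" by (cases v rule: col7.cases) auto
next
  fix u v :: "F3V \<times> bool"
  assume "blowup2 F3_adj u v"
  then show "col7 u \<noteq> col7 v"
    apply (cases u rule: col7.cases; cases v rule: col7.cases)
    apply (simp_all add: blowup2_def F3_adj_def F3_edges_def split: if_splits)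
    done
qed

lemma not6: "\<not> proper_colouring (blowup2 F3_adj) 6 c"
proof
  assume H: "proper_colouring (blowup2 F3_adj) 6 c"
  have lt: "\<And>p. c p < 6" and ne: "\<And>p q. blowup2 F3_adj p q \<Longrightarrow> c p \<noteq> c q"
    using H by (auto simp: proper_colouring_def)
  have e: "\<And>u v b b'. F3_adj u v \<Longrightarrow> c (u,b) \<noteq> c (v,b')"
    using ne by (auto simp: blowup2_def)
  have s: "\<And>u. c (u,False) \<noteq> c (u,True)"
    using ne by (auto simp: blowup2_def)
  have A: "\<And>u v. (u,v) \<in> F3_edges \<Longrightarrow> F3_adj u v" "\<And>u v. (u,v) \<in> F3_edges \<Longrightarrow> F3_adj v u"
    by (auto simp: F3_adj_def)
  have ed: "(X,Y) \<in> F3_edges" "(Y,Z) \<in> F3_edges" "(Z,X) \<in> F3_edges"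
    "(X,V1) \<in> F3_edges" "(Z,V1) \<in> F3_edges" "(Y,V3) \<in> F3_edges" "(X,V3) \<in> F3_edges"
    "(X,V2) \<in> F3_edges" "(V1,V2) \<in> F3_edges" "(V2,V3) \<in> F3_edges"
    by (auto simp: F3_edges_def)
  define a1 where "a1 = c (X,False)"
  define a2 where "a2 = c (X,True)"
  define b1 where "b1 = c (Y,False)"
  define b2 where "b2 = c (Y,True)"
  define d1 where "d1 = c (Z,False)"
  define d2 where "d2 = c (Z,True)"
  define p1 where "p1 = c (V1,False)"
  define p2 where "p2 = c (V1,True)"
  define r1 where "r1 = c (V3,False)"
  define r2 where "r2 = c (V3,True)"
  define q where "q = c (V2,False)"
  note defs = a1_def a2_def b1_def b2_def d1_def d2_def p1_def p2_def r1_def r2_def q_def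
  have xy: "\<And>b b'. c (X,b) \<noteq> c (Y,b')" using e[OF A(1)[OF ed(1)]] by blast
  have yz: "\<And>b b'. c (Y,b) \<noteq> c (Z,b')" using e[OF A(1)[OF ed(2)]] by blast
  have zx: "\<And>b b'. c (X,b) \<noteq> c (Z,b')" using e[OF A(1)[OF ed(3)]] by metis
  have dist: "distinct [a1,a2,b1,b2,d1,d2]"
    unfolding defs distinct.simps set_simps using s[of X] s[of Y] s[of Z] xy yz zx
    by simp
  have sub: "set [a1,a2,b1,b2,d1,d2] \<subseteq> {..<6}" unfolding defs using lt by auto
  have card6: "card (set [a1,a2,b1,b2,d1,d2]) = 6" using distinct_card[OF dist] by simp
  have eq: "set [a1,a2,b1,b2,d1,d2] = {..<6}"
    using card_subset_eq[OF _ sub] card6 by simp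
  have P: "p1 \<in> {b1,b2}" "p2 \<in> {b1,b2}" "p1 \<noteq> p2"
  proof -
    have "p1 \<in> set [a1,a2,b1,b2,d1,d2]" "p2 \<in> set [a1,a2,b1,b2,d1,d2]"
      using eq lt unfolding defs by auto
    moreover have "p1 \<noteq> a1" "p1 \<noteq> a2" "p1 \<noteq> d1" "p1 \<noteq> d2"
      "p2 \<noteq> a1" "p2 \<noteq> a2" "p2 \<noteq> d1" "p2 \<noteq> d2" "p1 \<noteq> p2"
      unfolding defs using e[OF A(2)[OF ed(4)]] e[OF A(2)[OF ed(5)]] s by metis+
    ultimately show "p1 \<in> {b1,b2}" "p2 \<in> {b1,b2}" "p1 \<noteq> p2" by auto
  qed
  have R: "r1 \<in> {d1,d2}" "r2 \<in> {d1,d2}" "r1 \<noteq> r2"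
  proof -
    have "r1 \<in> set [a1,a2,b1,b2,d1,d2]" "r2 \<in> set [a1,a2,b1,b2,d1,d2]"
      using eq lt unfolding defs by auto
    moreover have "r1 \<noteq> a1" "r1 \<noteq> a2" "r1 \<noteq> b1" "r1 \<noteq> b2"
      "r2 \<noteq> a1" "r2 \<noteq> a2" "r2 \<noteq> b1" "r2 \<noteq> b2" "r1 \<noteq> r2"
      unfolding defs using e[OF A(2)[OF ed(7)]] e[OF A(2)[OF ed(6)]] s by metis+
    ultimately show "r1 \<in> {d1,d2}" "r2 \<in> {d1,d2}" "r1 \<noteq> r2" by auto
  qed
  have Q: "q \<noteq> a1" "q \<noteq> a2" "q \<noteq> p1" "q \<noteq> p2" "q \<noteq> r1" "q \<noteq> r2"
    unfolding defs using e[OF A(2)[OF ed(8)]] e[OF A(2)[OF ed(9)]] e[OF A(1)[OF ed(10)]] by metis+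
  have "q \<in> set [a1,a2,b1,b2,d1,d2]" using eq lt unfolding defs by auto
  then show False using P R Q dist by auto
qed

theorem lemma5p5:
  shows "chromatic_number (blowup2 F3_adj) = 7"
proof -
  have c7: "colourable (blowup2 F3_adj) 7" using col7_ok by (auto simp: colourable_def)
  have "\<And>k. colourable (blowup2 F3_adj) k \<Longrightarrow> 7 \<le> k"
  proof (rule ccontr)
    fix k assume "colourable (blowup2 F3_adj) k" "\<not> 7 \<le> k"
    then obtain c where "proper_colouring (blowup2 F3_adj) k c" by (auto simp: colourable_def)
    moreover have "\<And>v. c v < k \<Longrightarrow> c v < 6" using \<open>\<not> 7 \<le> k\<close> by linarith
    ultimately have "proper_colouring (blowup2 F3_adj) 6 c"
      by (auto simp: proper_colouring_def)
    then show False using not6 by blast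
  qed
  then show ?thesis unfolding chromatic_number_def
    by (intro Least_equality c7) auto
qed

end
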